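(* Let $B$, $C$ be unital $\mathrm{C}^*$-algebras, let $\{\phi_i\}_{i=1}^m$, $\{\psi_j\}_{j=1}^n$ be families of surjective $*$-homomorphisms $B\to C$ with $m\ge n$, and let $[c_{ij}]\in M_{m,n}(C)$ satisfy $\phi_i(b)c_{ij}=c_{ij}\psi_j(b)$ for all $b\in B$, $1\le i\le m$, $1\le j\le n$. If $[c_{ij}]$ is right invertible and $C$ has trivial center, then $m=n$ and there exist invertible matrices $E,F\in M_n(C)$ such that $E[c_{ij}]F$ is a diagonal matrix with invertible diagonal entries.
   Context: A matrix $[c_{ij}]\in M_{m,n}(C)$ is right invertible if there is $[d_{ij}]\in M_{n,m}(C)$ with $[c_{ij}][d_{ij}]=I_m$. *)

theory Defs
  imports Complex_Main "Jordan_Normal_Form.Matrix"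
begin

class cstar_ops =
  fixes scaleC :: "complex \<Rightarrow> 'a \<Rightarrow> 'a"
    and cstar :: "'a \<Rightarrow> 'a"

class unital_cstar_algebra = real_normed_algebra_1 + banach + cstar_ops +
  assumes scaleC_scaleR: "scaleR r x = scaleC (complex_of_real r) x"
    and scaleC_add_right: "scaleC a (x + y) = scaleC a x + scaleC a y"
    and scaleC_add_left: "scaleC (a + b) x = scaleC a x + scaleC b x"
    and scaleC_scaleC: "scaleC a (scaleC b x) = scaleC (a * b) x"
    and scaleC_one: "scaleC 1 x = x"
    and norm_scaleC: "norm (scaleC a x) = cmod a * norm x"
    and mult_scaleC_left: "scaleC a x * y = scaleC a (x * y)"
    and mult_scaleC_right: "x * scaleC a y = scaleC a (x * y)"
    and cstar_cstar: "cstar (cstar x) = x"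
    and cstar_add: "cstar (x + y) = cstar x + cstar y"
    and cstar_scaleC: "cstar (scaleC a x) = scaleC (cnj a) (cstar x)"
    and cstar_mult: "cstar (x * y) = cstar y * cstar x"
    and cstar_identity: "norm (cstar x * x) = (norm x)\<^sup>2"

definition star_hom :: "('a::unital_cstar_algebra \<Rightarrow> 'b::unital_cstar_algebra) \<Rightarrow> bool" where
  "star_hom f \<longleftrightarrow>
     (\<forall>x y. f (x + y) = f x + f y) \<and>
     (\<forall>a x. f (scaleC a x) = scaleC a (f x)) \<and>
     (\<forall>x y. f (x * y) = f x * f y) \<and>
     (\<forall>x. f (cstar x) = cstar (f x))"

definition trivial_center :: "'a::unital_cstar_algebra itself \<Rightarrow> bool" where
  "trivial_center _ \<longleftrightarrow> {z::'a. \<forall>x. z * x = x * z} = range (\<lambda>a. scaleC a 1)"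

definition right_invertible_mat :: "'a::semiring_1 mat \<Rightarrow> bool" where
  "right_invertible_mat A \<longleftrightarrow>
     (\<exists>D \<in> carrier_mat (dim_col A) (dim_row A). A * D = 1\<^sub>m (dim_row A))"

definition invertible_elem :: "'a::ring_1 \<Rightarrow> bool" where
  "invertible_elem x \<longleftrightarrow> (\<exists>y. x * y = 1 \<and> y * x = 1)"

end

theory Submission
  imports Defs "Jordan_Normal_Form.Determinant"
begin

definition emb :: "complex \<Rightarrow> 'a::unital_cstar_algebra" where
  "emb a = scaleC a 1"

lemma scaleC_zero_left: "scaleC 0 (x::'a::unital_cstar_algebra) = 0"
  using scaleC_scaleR[of 0 x] by simp

lemma emb_0[simp]: "emb 0 = (0::'a::unital_cstar_algebra)"
  by (simp add: emb_def scaleC_zero_left)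

lemma emb_1[simp]: "emb 1 = (1::'a::unital_cstar_algebra)"
  by (simp add: emb_def scaleC_one)

lemma emb_add: "emb (a + b) = (emb a + emb b :: 'a::unital_cstar_algebra)"
  by (simp add: emb_def scaleC_add_left)

lemma emb_mult: "emb (a * b) = (emb a * emb b :: 'a::unital_cstar_algebra)"
  by (simp add: emb_def mult_scaleC_left scaleC_scaleC)

lemma emb_comm: "emb a * x = x * (emb a :: 'a::unital_cstar_algebra)"
  by (simp add: emb_def mult_scaleC_left mult_scaleC_right)

lemma norm_emb: "norm (emb a :: 'a::unital_cstar_algebra) = cmod a"
  by (simp add: emb_def norm_scaleC)

lemma emb_inj: "emb a = (0::'a::unital_cstar_algebra) \<Longrightarrow> a = 0"
  using norm_emb[of a, where 'a='a] by simp

lemma emb_semiring_hom: "semiring_hom (emb :: complex \<Rightarrow> 'a::unital_cstar_algebra)"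
  by unfold_locales (auto simp: emb_add emb_mult)

lemma cstar_zero: "cstar 0 = (0::'a::unital_cstar_algebra)"
  using cstar_add[of "0::'a" 0] by simp

lemma star_hom_mult: "star_hom f \<Longrightarrow> f (x * y) = f x * f y"
  by (simp add: star_hom_def)
lemma star_hom_cstar: "star_hom f \<Longrightarrow> f (cstar x) = cstar (f x)"
  by (simp add: star_hom_def)

definition intw :: "('b \<Rightarrow> 'a::unital_cstar_algebra) \<Rightarrow> ('b \<Rightarrow> 'a) \<Rightarrow> 'a \<Rightarrow> bool" where
  "intw f g w \<longleftrightarrow> (\<forall>b. f b * w = w * g b)"

lemma central_emb:
  assumes center: "trivial_center TYPE('a::unital_cstar_algebra)"
    and "\<And>x. z * x = x * (z::'a)"
  shows "\<exists>a. z = emb a"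
proof -
  have "z \<in> {z::'a. \<forall>x. z * x = x * z}" using assms(2) by auto
  hence "z \<in> range (\<lambda>a. scaleC a (1::'a))" using center unfolding trivial_center_def by simp
  thus ?thesis by (auto simp: emb_def)
qed

lemma zero_or_inv:
  fixes f g :: "'b::unital_cstar_algebra \<Rightarrow> 'a::unital_cstar_algebra"
  assumes f: "star_hom f" "surj f" and g: "star_hom g" "surj g"
    and center: "trivial_center TYPE('a)"
    and iw: "intw f g w"
  shows "w = 0 \<or> invertible_elem w"
proof (cases "w = 0")
  case True thus ?thesis by simp
next
  case False
  have iw': "\<And>b. f b * w = w * g b" using iw by (simp add: intw_def)
  have siw: "cstar w * f b = g b * cstar w" for b
  proof -
    have "f (cstar b) * w = w * g (cstar b)" by (rule iw')
    hence "cstar (f (cstar b) * w) = cstar (w * g (cstar b))" by simp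
    thus ?thesis using f g by (simp add: cstar_mult star_hom_cstar cstar_cstar)
  qed
  have c1: "(cstar w * w) * x = x * (cstar w * w)" for x
  proof -
    obtain b where x: "x = g b" using g(2) by (metis surjD)
    have "(cstar w * w) * g b = cstar w * (f b * w)" by (simp add: iw' mult.assoc)
    also have "\<dots> = g b * (cstar w * w)" by (simp add: siw flip: mult.assoc)
    finally show ?thesis using x by simp
  qed
  have c2: "(w * cstar w) * x = x * (w * cstar w)" for x
  proof -
    obtain b where x: "x = f b" using f(2) by (metis surjD)
    have "(w * cstar w) * f b = w * (g b * cstar w)" by (simp add: siw mult.assoc)
    also have "\<dots> = f b * (w * cstar w)" by (simp add: iw' flip: mult.assoc)
    finally show ?thesis using x by simp
  qed
  obtain l where l: "cstar w * w = emb l" using central_emb[OF center c1] by blast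
  obtain u where u: "w * cstar w = emb u" using central_emb[OF center c2] by blast
  have "cmod l = (norm w)^2" using cstar_identity[of w] l by (simp add: norm_emb)
  hence l0: "l \<noteq> 0" using False by auto
  have sw: "cstar w \<noteq> 0" using False cstar_cstar[of w] cstar_zero by metis
  have "cmod u = (norm (cstar w))^2" using cstar_identity[of "cstar w"] u
    by (simp add: norm_emb cstar_cstar)
  hence u0: "u \<noteq> 0" using sw by auto
  define le where "le = emb (1/l) * cstar w"
  define r where "r = cstar w * emb (1/u)"
  have le: "le * w = 1" unfolding le_def using l0
    by (simp add: mult.assoc l flip: emb_mult)
  have r: "w * r = 1" unfolding r_def using u0
    by (simp add: u flip: mult.assoc emb_mult)
  have "le = r" by (metis le r mult.assoc mult_1_left mult_1_right)
  thus ?thesis using le r unfolding invertible_elem_def by auto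
qed


definition inv_el :: "'a::ring_1 \<Rightarrow> 'a" where
  "inv_el x = (SOME y. x * y = 1 \<and> y * x = 1)"

lemma inv_el: "invertible_elem x \<Longrightarrow> x * inv_el x = 1 \<and> inv_el x * x = 1"
  unfolding invertible_elem_def inv_el_def by (rule someI_ex)

lemma inv_el_inv: "invertible_elem x \<Longrightarrow> invertible_elem (inv_el x)"
  using inv_el unfolding invertible_elem_def by blast

lemma inv_mult: "invertible_elem (x::'a::ring_1) \<Longrightarrow> invertible_elem y \<Longrightarrow> invertible_elem (x * y)"
  unfolding invertible_elem_def
  by (metis mult.assoc mult_1_left mult_1_right)

lemma intw_comp: "intw f g x \<Longrightarrow> intw g h y \<Longrightarrow> intw f h (x * y)"
  unfolding intw_def by (metis mult.assoc)

lemma intw_inv: assumes "invertible_elem x" "intw f g x" shows "intw g f (inv_el x)"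
  unfolding intw_def
proof
  fix b
  have "g b * inv_el x = inv_el x * x * g b * inv_el x" using inv_el[OF assms(1)] by simp
  also have "\<dots> = inv_el x * (x * g b) * inv_el x" by (simp add: mult.assoc)
  also have "\<dots> = inv_el x * (f b * x) * inv_el x" using assms(2) by (simp add: intw_def)
  also have "\<dots> = inv_el x * f b * (x * inv_el x)" by (simp add: mult.assoc)
  also have "\<dots> = inv_el x * f b" using inv_el[OF assms(1)] by simp
  finally show "g b * inv_el x = inv_el x * f b" .
qed

lemma intw_refl: "intw f f 1" by (simp add: intw_def)

definition dg :: "nat \<Rightarrow> (nat \<Rightarrow> 'a::semiring_1) \<Rightarrow> 'a mat" where
  "dg k f = mat k k (\<lambda>(i,j). if i = j then f i else 0)"

lemma dg_carrier[simp]: "dg k f \<in> carrier_mat k k" by (simp add: dg_def)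

lemma dg_mult_left: assumes A: "A \<in> carrier_mat k l"
  shows "dg k f * A = mat k l (\<lambda>(i,j). f i * A $$ (i,j))"
proof (rule eq_matI)
  fix i j assume i: "i < dim_row (mat k l (\<lambda>(i,j). f i * A $$ (i,j)))"
    and j: "j < dim_col (mat k l (\<lambda>(i,j). f i * A $$ (i,j)))"
  hence i: "i < k" and j: "j < l" by auto
  have "(dg k f * A) $$ (i,j) = (\<Sum>x = 0..<k. (if i = x then f i else 0) * A $$ (x, j))"
    using i j A by (simp add: dg_def scalar_prod_def)
  also have "\<dots> = (\<Sum>x = 0..<k. if x = i then f i * A $$ (x, j) else 0)"
    by (rule sum.cong) auto
  also have "\<dots> = f i * A $$ (i,j)" using i by simp
  finally show "(dg k f * A) $$ (i,j) = mat k l (\<lambda>(i,j). f i * A $$ (i,j)) $$ (i,j)"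
    using i j by simp
qed (use A in \<open>auto simp: dg_def\<close>)

lemma dg_mult_right: assumes A: "A \<in> carrier_mat k l"
  shows "A * dg l f = mat k l (\<lambda>(i,j). A $$ (i,j) * f j)"
proof (rule eq_matI)
  fix i j assume i: "i < dim_row (mat k l (\<lambda>(i,j). A $$ (i,j) * f j))"
    and j: "j < dim_col (mat k l (\<lambda>(i,j). A $$ (i,j) * f j))"
  hence i: "i < k" and j: "j < l" by auto
  have "(A * dg l f) $$ (i,j) = (\<Sum>x = 0..<l. A $$ (i, x) * (if x = j then f x else 0))"
    using i j A by (simp add: dg_def scalar_prod_def)
  also have "\<dots> = (\<Sum>x = 0..<l. if x = j then A $$ (i, x) * f x else 0)"
    by (rule sum.cong) auto
  also have "\<dots> = A $$ (i,j) * f j" using j by simp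
  finally show "(A * dg l f) $$ (i,j) = mat k l (\<lambda>(i,j). A $$ (i,j) * f j) $$ (i,j)"
    using i j by simp
qed (use A in \<open>auto simp: dg_def\<close>)

lemma dg_mult_dg: "dg k f * dg k g = dg k (\<lambda>i. f i * g i)"
  unfolding dg_mult_left[OF dg_carrier] by (rule eq_matI) (auto simp: dg_def)

lemma dg_one: "(\<And>i. i < k \<Longrightarrow> f i = 1) \<Longrightarrow> dg k f = 1\<^sub>m k"
  by (rule eq_matI) (auto simp: dg_def)


lemma cancel_mat:
  fixes A B X :: "'a::semiring_1 mat"
  assumes "A * B = 1\<^sub>m k" "A \<in> carrier_mat k k" "B \<in> carrier_mat k k" "X \<in> carrier_mat k l"
  shows "A * (B * X) = X"
proof -
  have "A * (B * X) = (A * B) * X" by (rule assoc_mult_mat[symmetric, OF assms(2,3,4)])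
  also have "\<dots> = 1\<^sub>m k * X" by (simp only: assms(1))
  also have "\<dots> = X" by (rule left_mult_one_mat[OF assms(4)])
  finally show ?thesis .
qed

theorem lemma3p3:
  fixes phi :: "nat \<Rightarrow> 'b::unital_cstar_algebra \<Rightarrow> 'c::unital_cstar_algebra"
    and psi :: "nat \<Rightarrow> 'b \<Rightarrow> 'c"
    and c :: "'c mat"
    and m n :: nat
  assumes phi: "\<And>i. i < m \<Longrightarrow> star_hom (phi i) \<and> surj (phi i)"
    and psi: "\<And>j. j < n \<Longrightarrow> star_hom (psi j) \<and> surj (psi j)"
    and mn: "m \<ge> n"
    and c_dim: "c \<in> carrier_mat m n"
    and intertw: "\<And>b i j. i < m \<Longrightarrow> j < n \<Longrightarrow> phi i b * c $$ (i, j) = c $$ (i, j) * psi j b"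
    and rinv: "right_invertible_mat c"
    and center: "trivial_center TYPE('c)"
  shows "m = n \<and>
    (\<exists>E \<in> carrier_mat n n. \<exists>F \<in> carrier_mat n n.
       invertible_mat E \<and> invertible_mat F \<and>
       diagonal_mat (E * c * F) \<and>
       (\<forall>i < n. invertible_elem ((E * c * F) $$ (i, i))))"
proof -
  interpret e: semiring_hom "emb :: complex \<Rightarrow> 'c" by (rule emb_semiring_hom)
  obtain D where D: "D \<in> carrier_mat n m" "c * D = 1\<^sub>m m"
    using rinv c_dim unfolding right_invertible_mat_def by auto
  have rownz: "\<exists>j<n. c $$ (i,j) \<noteq> 0" if i: "i < m" for i
  proof (rule ccontr)
    assume "\<not> ?thesis" hence z: "\<forall>j<n. c $$ (i,j) = 0" by auto
    have "(c * D) $$ (i,i) = (\<Sum>k=0..<n. c $$ (i,k) * D $$ (k,i))"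
      using i c_dim D(1) by (simp add: scalar_prod_def)
    also have "\<dots> = 0" using z by simp
    finally have "(c * D) $$ (i,i) = 0" .
    moreover have "(c * D) $$ (i,i) = 1" using D(2) i by simp
    ultimately show False by simp
  qed
  define rel where "rel = (\<lambda>k j. \<exists>w. invertible_elem w \<and> intw (psi k) (psi j) w)"
  have rel_refl: "rel j j" for j
    unfolding rel_def by (rule exI[of _ 1]) (simp add: invertible_elem_def intw_refl)
  have rel_sym: "rel j k" if "rel k j" for k j
    using that unfolding rel_def using inv_el_inv intw_inv by blast
  have rel_trans: "rel k l" if "rel k j" "rel j l" for k j l
    using that unfolding rel_def using inv_mult intw_comp by blast
  define r where "r = (\<lambda>j. LEAST k. rel k j)"
  have r_rel: "rel (r j) j" for j unfolding r_def by (rule LeastI[of _ j]) (rule rel_refl)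
  have r_le: "r j \<le> j" for j unfolding r_def by (rule Least_le) (rule rel_refl)
  have r_min: "r j \<le> k" if "rel k j" for j k unfolding r_def using that by (rule Least_le)
  define v where "v = (\<lambda>j. SOME w. invertible_elem w \<and> intw (psi (r j)) (psi j) w)"
  have v: "invertible_elem (v j) \<and> intw (psi (r j)) (psi j) (v j)" for j
    unfolding v_def using r_rel[of j] unfolding rel_def by (rule someI_ex)
  define J where "J = (\<lambda>i. SOME j. j < n \<and> c $$ (i,j) \<noteq> 0)"
  have J: "J i < n \<and> c $$ (i, J i) \<noteq> 0" if "i < m" for i
    unfolding J_def using rownz[OF that] by (rule someI_ex)
  have cint: "intw (phi i) (psi j) (c $$ (i,j))" if "i < m" "j < n" for i j
    using intertw[OF that] by (simp add: intw_def)
  have cinv: "invertible_elem (c $$ (i, J i))" if i: "i < m" for i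
    using zero_or_inv[OF conjunct1[OF phi[OF i]] conjunct2[OF phi[OF i]]
        conjunct1[OF psi] conjunct2[OF psi] center cint[OF i]] J[OF i] by auto
  define t where "t = (\<lambda>i. c $$ (i, J i) * inv_el (v (J i)))"
  have t: "invertible_elem (t i) \<and> intw (phi i) (psi (r (J i))) (t i)" if i: "i < m" for i
    unfolding t_def using cinv[OF i] v[of "J i"] J[OF i] cint[OF i]
    by (metis inv_mult inv_el_inv intw_comp intw_inv)
  have scal: "\<exists>a. inv_el (t i) * c $$ (i,j) * inv_el (v j) = emb a" if i: "i < m" and j: "j < n" for i j
  proof -
    let ?s = "inv_el (t i) * c $$ (i,j) * inv_el (v j)"
    have iw: "intw (psi (r (J i))) (psi (r j)) ?s"
      by (rule intw_comp[OF intw_comp[OF intw_inv cint[OF i j]] intw_inv])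
        (use t[OF i] v[of j] in auto)
    have Rn: "r (J i) < n" using r_le[of "J i"] J[OF i] by simp
    have rn: "r j < n" using r_le[of j] j by simp
    have "?s = 0 \<or> invertible_elem ?s"
      by (rule zero_or_inv[OF conjunct1[OF psi[OF Rn]] conjunct2[OF psi[OF Rn]]
        conjunct1[OF psi[OF rn]] conjunct2[OF psi[OF rn]] center iw])
    thus ?thesis
    proof
      assume "?s = 0" thus ?thesis by (metis emb_0)
    next
      assume inv: "invertible_elem ?s"
      have rel1: "rel (r (J i)) (r j)" unfolding rel_def using inv iw by blast
      have "r j \<le> r (J i)" by (rule r_min) (rule rel_trans[OF rel1 r_rel])
      moreover have "r (J i) \<le> r j"
        by (rule r_min) (rule rel_trans[OF rel_sym[OF rel1] r_rel])
      ultimately have eq: "r (J i) = r j" by simp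
      have "?s * x = x * ?s" for x
      proof -
        obtain b where "x = psi (r j) b" using conjunct2[OF psi[OF rn]] by (metis surjD)
        thus ?thesis using iw eq unfolding intw_def by simp
      qed
      thus ?thesis using central_emb[OF center] by blast
    qed
  qed
  define a where "a = (\<lambda>i j. SOME a. inv_el (t i) * c $$ (i,j) * inv_el (v j) = emb a)"
  have a: "inv_el (t i) * c $$ (i,j) * inv_el (v j) = emb (a i j)" if "i < m" "j < n" for i j
    unfolding a_def using scal[OF that] by (rule someI_ex)
  define S0 where "S0 = mat m n (\<lambda>(i,j). a i j)"
  have S0c: "S0 \<in> carrier_mat m n" by (simp add: S0_def)
  define Ti where "Ti = dg m (\<lambda>i. inv_el (t i))"
  define T where "T = dg m t"
  define Vi where "Vi = dg n (\<lambda>j. inv_el (v j))"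
  define V where "V = dg n v"
  have carr: "Ti \<in> carrier_mat m m" "T \<in> carrier_mat m m" "Vi \<in> carrier_mat n n" "V \<in> carrier_mat n n"
    by (simp_all add: Ti_def T_def Vi_def V_def)
  have S: "Ti * c * Vi = map_mat emb S0"
  proof -
    have mc: "mat m n (\<lambda>(i, j). inv_el (t i) * c $$ (i, j)) \<in> carrier_mat m n" by simp
    show ?thesis
      unfolding Ti_def Vi_def dg_mult_left[OF c_dim] dg_mult_right[OF mc]
      by (rule eq_matI) (auto simp: S0_def a)
  qed
  have S': "Ti * (c * Vi) = map_mat emb S0"
    using S c_dim carr by (simp add: assoc_mult_mat)
  have TiT: "Ti * T = 1\<^sub>m m" unfolding Ti_def T_def dg_mult_dg
    by (rule dg_one) (use t inv_el in auto)
  have TTi: "T * Ti = 1\<^sub>m m" unfolding Ti_def T_def dg_mult_dg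
    by (rule dg_one) (use t inv_el in auto)
  have ViV: "Vi * V = 1\<^sub>m n" unfolding Vi_def V_def dg_mult_dg
    by (rule dg_one) (use v inv_el in auto)
  have VVi: "V * Vi = 1\<^sub>m n" unfolding Vi_def V_def dg_mult_dg
    by (rule dg_one) (use v inv_el in auto)
  define D2 where "D2 = V * (D * T)"
  have DTc: "D * T \<in> carrier_mat n m" using D carr by simp
  have D2c: "D2 \<in> carrier_mat n m" using carr DTc by (simp add: D2_def)
  have cVic: "c * Vi \<in> carrier_mat m n" using c_dim carr by simp
  have SD: "map_mat emb S0 * D2 = 1\<^sub>m m"
  proof -
    have "map_mat emb S0 * D2 = Ti * (c * Vi) * D2" unfolding S' ..
    also have "\<dots> = Ti * ((c * Vi) * D2)" by (rule assoc_mult_mat[OF carr(1) cVic D2c])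
    also have "(c * Vi) * D2 = c * (Vi * D2)" by (rule assoc_mult_mat[OF c_dim carr(3) D2c])
    also have "Vi * D2 = D * T" unfolding D2_def
      by (rule cancel_mat[OF ViV carr(3) carr(4) DTc])
    also have "c * (D * T) = T"
    proof -
      have "c * (D * T) = (c * D) * T" by (rule assoc_mult_mat[symmetric, OF c_dim D(1) carr(2)])
      also have "\<dots> = 1\<^sub>m m * T" by (simp only: D(2))
      also have "\<dots> = T" by (rule left_mult_one_mat[OF carr(2)])
      finally show ?thesis .
    qed
    finally show ?thesis using TiT by simp
  qed
  have SDc: "map_mat emb S0 \<in> carrier_mat m n" using S0c by simp
  have key: "x = 0\<^sub>v m" if x: "x \<in> carrier_vec m"
    and hx: "\<forall>j<n. (\<Sum>i=0..<m. x$i * S0$$(i,j)) = 0" for x :: "complex vec"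
  proof (rule eq_vecI)
    fix k assume "k < dim_vec (0\<^sub>v m :: complex vec)" hence k: "k < m" by simp
    have "emb (x$k) = (\<Sum>i=0..<m. if i = k then emb (x$i) else (0::'c))" using k by simp
    also have "\<dots> = (\<Sum>i=0..<m. emb (x$i) * (map_mat emb S0 * D2)$$(i,k))"
      unfolding SD by (rule sum.cong) (use k in auto)
    also have "\<dots> = (\<Sum>i=0..<m. emb (x$i) * (\<Sum>j=0..<n. emb (S0$$(i,j)) * D2$$(j,k)))"
      by (rule sum.cong) (use k S0c D2c in \<open>auto simp: scalar_prod_def intro!: sum.cong\<close>)
    also have "\<dots> = (\<Sum>j=0..<n. (\<Sum>i=0..<m. emb (x$i) * emb (S0$$(i,j))) * D2$$(j,k))"
      unfolding sum_distrib_left sum_distrib_right mult.assoc by (rule sum.swap)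
    also have "\<dots> = (\<Sum>j=0..<n. emb (\<Sum>i=0..<m. x$i * S0$$(i,j)) * D2$$(j,k))"
      by (simp add: e.hom_sum emb_mult)
    also have "\<dots> = 0" using hx by simp
    finally have "emb (x$k) = (0::'c)" .
    thus "x $ k = 0\<^sub>v m $ k" using emb_inj k by simp
  qed (use x in simp)
  define P where "P = mat m m (\<lambda>(i,j). if j < n then S0$$(i,j) else 0)"
  have Pc: "P \<in> carrier_mat m m" by (simp add: P_def)
  have detP: "det P \<noteq> 0"
  proof
    assume "det P = 0"
    hence "det (transpose_mat P) = 0" using det_transpose[OF Pc] by simp
    then obtain w where w: "w \<in> carrier_vec m" "w \<noteq> 0\<^sub>v m" "transpose_mat P *\<^sub>v w = 0\<^sub>v m"
      using det_0_iff_vec_prod_zero_field[of "transpose_mat P" m] Pc by auto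
    have "\<forall>j<n. (\<Sum>i=0..<m. w$i * S0$$(i,j)) = 0"
    proof (intro allI impI)
      fix j assume j: "j < n"
      have "(transpose_mat P *\<^sub>v w) $ j = 0" using w(3) j mn by simp
      moreover have "(transpose_mat P *\<^sub>v w) $ j = (\<Sum>i=0..<m. w$i * S0$$(i,j))"
        using j mn w(1) Pc by (auto simp: P_def scalar_prod_def mult.commute intro!: sum.cong)
      ultimately show "(\<Sum>i=0..<m. w$i * S0$$(i,j)) = 0" by simp
    qed
    with key w show False by auto
  qed
  have meq: "m = n"
  proof (rule ccontr)
    assume "m \<noteq> n" hence lt: "n < m" using mn by simp
    let ?u = "unit_vec m (m-1) :: complex vec"
    have "P *\<^sub>v ?u = 0\<^sub>v m"
      by (rule eq_vecI) (use lt in \<open>auto simp: P_def scalar_prod_def intro!: sum.neutral\<close>)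
    moreover have "?u \<noteq> 0\<^sub>v m"
    proof
      assume "?u = 0\<^sub>v m"
      hence "?u $ (m-1) = 0\<^sub>v m $ (m-1)" by simp
      thus False using lt by simp
    qed
    ultimately have "det P = 0" unfolding det_0_iff_vec_prod_zero_field[OF Pc]
      by (intro exI[of _ ?u]) simp
    with detP show False by simp
  qed
  have PS: "P = S0" by (rule eq_matI) (use meq S0c in \<open>auto simp: P_def\<close>)
  have "S0 \<in> Units (ring_mat TYPE(complex) m ())"
    using det_non_zero_imp_unit[OF Pc detP] PS by simp
  then obtain B where B: "B \<in> carrier_mat m m" "B * S0 = 1\<^sub>m m" "S0 * B = 1\<^sub>m m"
    by (auto simp: Units_def ring_mat_def)
  have S0c': "S0 \<in> carrier_mat m m" using S0c meq by simp
  define mB where "mB = map_mat (emb :: complex \<Rightarrow> 'c) B"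
  define mS where "mS = map_mat (emb :: complex \<Rightarrow> 'c) S0"
  have mBc: "mB \<in> carrier_mat m m" using B(1) by (simp add: mB_def)
  have mSc: "mS \<in> carrier_mat m m" using S0c' by (simp add: mS_def)
  have BS: "mB * mS = 1\<^sub>m m" unfolding mB_def mS_def
    using e.mat_hom_mult[OF B(1) S0c', symmetric] B(2) e.mat_hom_one by simp
  have SB: "mS * mB = 1\<^sub>m m" unfolding mB_def mS_def
    using e.mat_hom_mult[OF S0c' B(1), symmetric] B(3) e.mat_hom_one by simp
  have c': "c \<in> carrier_mat m m" using c_dim meq by simp
  have Vic: "Vi \<in> carrier_mat m m" "V \<in> carrier_mat m m" using carr meq by simp_all
  define E where "E = mB * Ti"
  define F where "F = Vi"
  have Ec: "E \<in> carrier_mat m m" using mBc carr by (simp add: E_def)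
  have Tic: "Ti * c \<in> carrier_mat m m" using carr c' by simp
  have ECF: "E * c * F = 1\<^sub>m m"
  proof -
    have "E * c * F = mB * (Ti * c) * Vi" unfolding E_def F_def
      by (simp only: assoc_mult_mat[OF mBc carr(1) c'])
    also have "\<dots> = mB * ((Ti * c) * Vi)" by (rule assoc_mult_mat[OF mBc Tic Vic(1)])
    also have "(Ti * c) * Vi = mS" using S by (simp add: mS_def)
    finally show ?thesis using BS by simp
  qed
  have Einv: "invertible_mat E"
  proof -
    have TmSc: "T * mS \<in> carrier_mat m m" using carr mSc by simp
    have mBTic: "mB * Ti \<in> carrier_mat m m" using carr mBc by simp
    have 1: "E * (T * mS) = 1\<^sub>m m"
    proof -
      have "E * (T * mS) = mB * (Ti * (T * mS))" unfolding E_def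
        by (rule assoc_mult_mat[OF mBc carr(1) TmSc])
      also have "Ti * (T * mS) = mS" by (rule cancel_mat[OF TiT carr(1) carr(2) mSc])
      finally show ?thesis using BS by simp
    qed
    have 2: "(T * mS) * E = 1\<^sub>m m"
    proof -
      have "(T * mS) * E = T * (mS * (mB * Ti))" unfolding E_def
        by (rule assoc_mult_mat[OF carr(2) mSc mBTic])
      also have "mS * (mB * Ti) = Ti" by (rule cancel_mat[OF SB mSc mBc carr(1)])
      finally show ?thesis using TTi by simp
    qed
    show ?thesis unfolding invertible_mat_def inverts_mat_def
      using 1 2 Ec TmSc by auto
  qed
  have Finv: "invertible_mat F" unfolding invertible_mat_def inverts_mat_def F_def
    using ViV VVi carr by (intro conjI exI[of _ V]) auto
  have "diagonal_mat (E * c * F)" unfolding ECF diagonal_mat_def by simp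
  moreover have "\<forall>i < n. invertible_elem ((E * c * F) $$ (i, i))"
    unfolding ECF using meq by (auto simp: invertible_elem_def)
  ultimately show ?thesis using Ec Vic meq Einv Finv unfolding F_def by auto
qed


end
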